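(* Under the hypotheses of the conformal-measure theorem described in the context, assume additionally that $\phi$ satisfies (H1). Then for a.e. $\omega$, every $n\ge1$, every $w=(w_0,\dots,w_{n-1})\in\mathcal W^n_\omega$ and every $x\in[w]_\omega$, $$\frac{\mu_{\theta^n\omega}(T_{\theta^{n-1}\omega}[w_{n-1}]_{\theta^{n-1}\omega})}{B_{\theta^n\omega}}\le\Lambda_n(\omega)\frac{\mu_\omega([w]_\omega)}{e^{\phi^\omega_n(x)-nP_G(\phi)}}\le B_{\theta^n\omega}\,\mu_{\theta^n\omega}(T_{\theta^{n-1}\omega}[w_{n-1}]_{\theta^{n-1}\omega}).$$ If moreover $(X,T)$ has the big image property, then $D_\omega:=\inf\{\mu_\omega(T_{\theta^{-1}\omega}[b]_{\theta^{-1}\omega}): b\in\mathcal W^1_{\theta^{-1}\omega}\}>0$ for a.e. $\omega\in\Omega_{bi}$, and hence for a.e. $\omega$, all $n$ with $\theta^n\omega\in\Omega_{bi}$, all $w\in\mathcal W^n_\omega$ and $x\in[w]_\omega$, $$B_{\theta^n\omega}^{-1}D_{\theta^n\omega}\le\Lambda_n(\omega)\frac{\mu_\omega([w]_\omega)}{e^{\phi^\omega_n(x)-nP_G(\phi)}}\le B_{\theta^n\omega}.$$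
   Context: Let $(\Omega,\mathcal F,P)$ be a probability space and $\theta:\Omega\to\Omega$ an invertible, bimeasurable, $P$-preserving, ergodic map. Let $\ell:\Omega\to\mathbb N\cup\{\infty\}$ be measurable with $\ell_\omega>1$, and for a.e. $\omega$ let $A_\omega=(\alpha_{ij}(\omega))_{0\le i<\ell_\omega,\,0\le j<\ell_{\theta\omega}}$ be a $\{0,1\}$-matrix depending measurably on $\omega$ such that every row contains an entry $1$. Put $X_\omega=\{x=(x_0,x_1,\dots): x_i<\ell_{\theta^i\omega},\ \alpha_{x_ix_{i+1}}(\theta^i\omega)=1\ \forall i\ge0\}$, $T_\omega:X_\omega\to X_{\theta\omega}$ the left shift, $X=\{(\omega,x):x\in X_\omega\}$, $T^n_\omega=T_{\theta^{n-1}\omega}\circ\cdots\circ T_\omega$. A word $w=(w_0,\dots,w_{n-1})$ is $\omega$-admissible if $w_i<\ell_{\theta^i\omega}$ for all $i<n$ and $\alpha_{w_iw_{i+1}}(\theta^i\omega)=1$ for $i<n-1$; $\mathcal W^n_\omega$ is the set of such words; $[w]_\omega=\{x\in X_\omega: x_i=w_i,\ i<n\}$; $\Omega_w=\{\omega: w\in\mathcal W^n_\omega\}$; $\mathcal W^n$ the words with $P(\Omega_w)>0$. Topologically mixing: for all $a,b\in\mathcal W^1$ there is an $\mathbb N$-valued random variable $N_{ab}$ with $[a]_\omega\cap(T^n_\omega)^{-1}[b]_{\theta^n\omega}\ne\emptyset$ whenever $\omega\in\Omega_a$, $n\ge N_{ab}(\omega)$, $\theta^n\omega\in\Omega_b$.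 Big image property: there exist measurable $\Omega_{bi}$ with $P(\Omega_{bi})>0$ and finite sets $\mathcal I^\omega_{bi}\subset\mathcal W^1_\omega$ ($\omega\in\Omega_{bi}$) such that for every $c\in\mathcal W^1_{\theta^{-1}\omega}$ there is $b\in\mathcal I^\omega_{bi}$ with $\alpha_{cb}(\theta^{-1}\omega)=1$. A potential is a measurable $\phi:X\to\mathbb R$; $\phi^\omega_n(x)=\sum_{k=0}^{n-1}\phi^{\theta^k\omega}(T^k_\omega x)$; $V^\omega_n(\phi)=\sup\{|\phi^\omega(x)-\phi^\omega(y)|: x_i=y_i\ (i<n)\}$. $\phi$ is $k$-Hölder if there are $r\in(0,1)$ and a random variable $\kappa\ge1$ with $\int\log\kappa\,dP<\infty$ and $V^\omega_j(\phi)\le\kappa(\omega)r^j$ for all $j\ge k$; $B_\omega:=\exp\sum_{j\ge1}\kappa(\theta^{-j}\omega)r^j$. (H1)/(H2): $\phi$ is 1-Hölder/2-Hölder and $\int\log B\,dP<\infty$. Ruelle operator $L^\omega_\phi f(x)=\sum_{y\in X_\omega,T_\omega y=x}e^{\phi^\omega(y)}f(y)$; (S1): $\int\log\sup L^\omega_\phi1\,dP<\infty$; (S2): $\int\log\inf L^\omega_\phi1\,dP>-\infty$. Setting of the conformal-measure theorem: $(X,T)$ topologically mixing, $\phi$ satisfies (H2),(S1),(S2), the relative Gurevič pressure $P_G(\phi)$ is finite, and $(X,T,\phi)$ is of divergence type, i.e. for a fixed $a\in\mathcal W^1$, a measurable family $\xi_\omega\in X_\omega$ with $\xi_\omega\in[a]_\omega$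 on $\Omega_a$ and some $\widetilde\Omega\subset\Omega_a$ of positive measure, $P_\omega(s)=\sum_{n:\theta^n\omega\in\widetilde\Omega}s^nL^{\omega,n}_\phi1(\xi_{\theta^n\omega})$ is finite for $s<e^{-P_G(\phi)}$ and infinite at $s=e^{-P_G(\phi)}$. Then there are $s_n\nearrow e^{-P_G(\phi)}$, $\lambda(\omega)=\lim_nP_\omega(s_n)/P_{\theta\omega}(s_n)\in(0,\infty)$ a.s., and Borel probability measures $\mu_\omega$ on $X_\omega$, positive on cylinders, with $\mu_{\theta\omega}(T_\omega E)=\lambda(\omega)\int_Ee^{P_G(\phi)-\phi^\omega}d\mu_\omega$ for all Borel $E\subset[c]_\omega$, $c\in\mathcal W^1_\omega$. $\lambda$ and $\mu_\omega$ denote these objects; $\Lambda_n(\omega)=\lambda(\omega)\lambda(\theta\omega)\cdots\lambda(\theta^{n-1}\omega)$. *)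

theory Defs
  imports "HOL-Probability.Probability"
begin

text \<open>Symbols are natural numbers; ell w :: enat is the
  number of symbols at fibre w (nat or infinity); alpha w i j is the 0/1 transition matrix
  entry (as a boolean).\<close>

type_synonym seqn = "nat \<Rightarrow> nat"

definition thinv :: "'w measure \<Rightarrow> ('w \<Rightarrow> 'w) \<Rightarrow> 'w \<Rightarrow> 'w" where
  "thinv M th = inv_into (space M) th"

definition SeqM :: "seqn measure" where
  "SeqM = PiM UNIV (\<lambda>_. count_space (UNIV :: nat set))"

definition Xfib :: "('w \<Rightarrow> 'w) \<Rightarrow> ('w \<Rightarrow> enat) \<Rightarrow> ('w \<Rightarrow> nat \<Rightarrow> nat \<Rightarrow> bool) \<Rightarrow> 'w \<Rightarrow> seqn set" where
  "Xfib th ell alpha w =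
     {x. \<forall>i. enat (x i) < ell ((th ^^ i) w) \<and> alpha ((th ^^ i) w) (x i) (x (Suc i))}"

definition shiftn :: "nat \<Rightarrow> seqn \<Rightarrow> seqn" where
  "shiftn k x = (\<lambda>i. x (i + k))"

definition words :: "('w \<Rightarrow> 'w) \<Rightarrow> ('w \<Rightarrow> enat) \<Rightarrow> ('w \<Rightarrow> nat \<Rightarrow> nat \<Rightarrow> bool) \<Rightarrow> 'w \<Rightarrow> nat \<Rightarrow> nat list set" where
  "words th ell alpha w n =
     {v. length v = n \<and> (\<forall>i<n. enat (v ! i) < ell ((th ^^ i) w))
        \<and> (\<forall>i. Suc i < n \<longrightarrow> alpha ((th ^^ i) w) (v ! i) (v ! Suc i))}"

definition cyl :: "('w \<Rightarrow> 'w) \<Rightarrow> ('w \<Rightarrow> enat) \<Rightarrow> ('w \<Rightarrow> nat \<Rightarrow> nat \<Rightarrow> bool) \<Rightarrow> 'w \<Rightarrow> nat list \<Rightarrow> seqn set" where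
  "cyl th ell alpha w v = {x \<in> Xfib th ell alpha w. \<forall>i<length v. x i = v ! i}"

definition Omega_w :: "'w measure \<Rightarrow> ('w \<Rightarrow> 'w) \<Rightarrow> ('w \<Rightarrow> enat) \<Rightarrow> ('w \<Rightarrow> nat \<Rightarrow> nat \<Rightarrow> bool) \<Rightarrow> nat list \<Rightarrow> 'w set" where
  "Omega_w M th ell alpha v = {w \<in> space M. v \<in> words th ell alpha w (length v)}"

definition Wn :: "'w measure \<Rightarrow> ('w \<Rightarrow> 'w) \<Rightarrow> ('w \<Rightarrow> enat) \<Rightarrow> ('w \<Rightarrow> nat \<Rightarrow> nat \<Rightarrow> bool) \<Rightarrow> nat \<Rightarrow> nat list set" where
  "Wn M th ell alpha n = {v. length v = n \<and> measure M (Omega_w M th ell alpha v) > 0}"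

definition ergodic_map :: "'w measure \<Rightarrow> ('w \<Rightarrow> 'w) \<Rightarrow> bool" where
  "ergodic_map M th \<longleftrightarrow>
     (\<forall>A \<in> sets M. th -` A \<inter> space M = A \<longrightarrow> measure M A = 0 \<or> measure M A = 1)"

definition phin :: "('w \<Rightarrow> seqn \<Rightarrow> real) \<Rightarrow> ('w \<Rightarrow> 'w) \<Rightarrow> 'w \<Rightarrow> nat \<Rightarrow> seqn \<Rightarrow> real" where
  "phin phi th w n x = (\<Sum>k<n. phi ((th ^^ k) w) (shiftn k x))"

definition Var :: "('w \<Rightarrow> 'w) \<Rightarrow> ('w \<Rightarrow> enat) \<Rightarrow> ('w \<Rightarrow> nat \<Rightarrow> nat \<Rightarrow> bool) \<Rightarrow> ('w \<Rightarrow> seqn \<Rightarrow> real) \<Rightarrow> 'w \<Rightarrow> nat \<Rightarrow> ereal" where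
  "Var th ell alpha phi w n =
     (SUP p \<in> {(x, y). x \<in> Xfib th ell alpha w \<and> y \<in> Xfib th ell alpha w \<and> (\<forall>i<n. x i = y i)}.
        ereal \<bar>phi w (fst p) - phi w (snd p)\<bar>)"

definition holder :: "'w measure \<Rightarrow> ('w \<Rightarrow> 'w) \<Rightarrow> ('w \<Rightarrow> enat) \<Rightarrow> ('w \<Rightarrow> nat \<Rightarrow> nat \<Rightarrow> bool) \<Rightarrow> ('w \<Rightarrow> seqn \<Rightarrow> real)
      \<Rightarrow> nat \<Rightarrow> ('w \<Rightarrow> real) \<Rightarrow> real \<Rightarrow> bool" where
  "holder M th ell alpha phi k kappa r \<longleftrightarrow>
     0 < r \<and> r < 1 \<and> kappa \<in> borel_measurable M \<and> (\<forall>w \<in> space M. 1 \<le> kappa w)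
     \<and> integrable M (\<lambda>w. ln (kappa w))
     \<and> (AE w in M. \<forall>j \<ge> k. Var th ell alpha phi w j \<le> ereal (kappa w * r ^ j))"

definition logB :: "'w measure \<Rightarrow> ('w \<Rightarrow> 'w) \<Rightarrow> ('w \<Rightarrow> real) \<Rightarrow> real \<Rightarrow> 'w \<Rightarrow> ennreal" where
  "logB M th kappa r w = (\<Sum>j. ennreal (kappa ((thinv M th ^^ Suc j) w) * r ^ Suc j))"

definition Bfun :: "'w measure \<Rightarrow> ('w \<Rightarrow> 'w) \<Rightarrow> ('w \<Rightarrow> real) \<Rightarrow> real \<Rightarrow> 'w \<Rightarrow> real" where
  "Bfun M th kappa r w = exp (enn2real (logB M th kappa r w))"

definition H1 :: "'w measure \<Rightarrow> ('w \<Rightarrow> 'w) \<Rightarrow> ('w \<Rightarrow> enat) \<Rightarrow> ('w \<Rightarrow> nat \<Rightarrow> nat \<Rightarrow> bool) \<Rightarrow> ('w \<Rightarrow> seqn \<Rightarrow> real)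
      \<Rightarrow> ('w \<Rightarrow> real) \<Rightarrow> real \<Rightarrow> bool" where
  "H1 M th ell alpha phi kappa r \<longleftrightarrow>
     holder M th ell alpha phi 1 kappa r \<and> (\<integral>\<^sup>+ w. logB M th kappa r w \<partial>M) < \<infinity>"

definition H2 :: "'w measure \<Rightarrow> ('w \<Rightarrow> 'w) \<Rightarrow> ('w \<Rightarrow> enat) \<Rightarrow> ('w \<Rightarrow> nat \<Rightarrow> nat \<Rightarrow> bool) \<Rightarrow> ('w \<Rightarrow> seqn \<Rightarrow> real) \<Rightarrow> bool" where
  "H2 M th ell alpha phi \<longleftrightarrow>
     (\<exists>kappa r. holder M th ell alpha phi 2 kappa r \<and> (\<integral>\<^sup>+ w. logB M th kappa r w \<partial>M) < \<infinity>)"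

text \<open>n-th iterate of the Ruelle operator applied to 1:
  L^{w,n} 1 (x) = sum over y in X_w with T^n y = x of exp(phi_n^w(y))\<close>
definition Lop :: "('w \<Rightarrow> 'w) \<Rightarrow> ('w \<Rightarrow> enat) \<Rightarrow> ('w \<Rightarrow> nat \<Rightarrow> nat \<Rightarrow> bool) \<Rightarrow> ('w \<Rightarrow> seqn \<Rightarrow> real) \<Rightarrow> 'w \<Rightarrow> nat \<Rightarrow> seqn \<Rightarrow> ennreal" where
  "Lop th ell alpha phi w n x =
     (\<integral>\<^sup>+ y. ennreal (exp (phin phi th w n y))
        \<partial>count_space {y \<in> Xfib th ell alpha w. shiftn n y = x})"

definition elog :: "ennreal \<Rightarrow> ereal" where
  "elog t = (if t = \<top> then \<infinity> else if t = 0 then - \<infinity> else ereal (ln (enn2real t)))"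

text \<open>(S1): integral of log sup L1 < infinity (positive part integrable);
      (S2): integral of log inf L1 > -infinity (negative part integrable)\<close>
definition S1 :: "'w measure \<Rightarrow> ('w \<Rightarrow> 'w) \<Rightarrow> ('w \<Rightarrow> enat) \<Rightarrow> ('w \<Rightarrow> nat \<Rightarrow> nat \<Rightarrow> bool) \<Rightarrow> ('w \<Rightarrow> seqn \<Rightarrow> real) \<Rightarrow> bool" where
  "S1 M th ell alpha phi \<longleftrightarrow>
     (\<integral>\<^sup>+ w. e2ennreal (elog (SUP x \<in> Xfib th ell alpha (th w). Lop th ell alpha phi w 1 x)) \<partial>M) < \<infinity>"

definition S2 :: "'w measure \<Rightarrow> ('w \<Rightarrow> 'w) \<Rightarrow> ('w \<Rightarrow> enat) \<Rightarrow> ('w \<Rightarrow> nat \<Rightarrow> nat \<Rightarrow> bool) \<Rightarrow> ('w \<Rightarrow> seqn \<Rightarrow> real) \<Rightarrow> bool" where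
  "S2 M th ell alpha phi \<longleftrightarrow>
     (\<integral>\<^sup>+ w. e2ennreal (- elog (INF x \<in> Xfib th ell alpha (th w). Lop th ell alpha phi w 1 x)) \<partial>M) < \<infinity>"

definition topmix :: "'w measure \<Rightarrow> ('w \<Rightarrow> 'w) \<Rightarrow> ('w \<Rightarrow> enat) \<Rightarrow> ('w \<Rightarrow> nat \<Rightarrow> nat \<Rightarrow> bool) \<Rightarrow> bool" where
  "topmix M th ell alpha \<longleftrightarrow>
     (\<forall>a b. [a] \<in> Wn M th ell alpha 1 \<and> [b] \<in> Wn M th ell alpha 1 \<longrightarrow>
        (\<exists>N :: 'w \<Rightarrow> nat. N \<in> measurable M (count_space UNIV) \<and>
          (AE w in M. \<forall>n. w \<in> Omega_w M th ell alpha [a] \<and> N w \<le> n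
              \<and> (th ^^ n) w \<in> Omega_w M th ell alpha [b] \<longrightarrow>
             cyl th ell alpha w [a] \<inter> {x. shiftn n x \<in> cyl th ell alpha ((th ^^ n) w) [b]} \<noteq> {})))"

definition Pser :: "('w \<Rightarrow> 'w) \<Rightarrow> ('w \<Rightarrow> enat) \<Rightarrow> ('w \<Rightarrow> nat \<Rightarrow> nat \<Rightarrow> bool) \<Rightarrow> ('w \<Rightarrow> seqn \<Rightarrow> real)
      \<Rightarrow> 'w set \<Rightarrow> ('w \<Rightarrow> seqn) \<Rightarrow> 'w \<Rightarrow> real \<Rightarrow> ennreal" where
  "Pser th ell alpha phi Ot xi w s =
     (\<Sum>n. if (th ^^ n) w \<in> Ot then ennreal (s ^ n) * Lop th ell alpha phi w n (xi ((th ^^ n) w)) else 0)"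

text \<open>Divergence type, with the relative Gurevic pressure P_G represented by the real PG:
  the series P_w(s) is finite for s < exp(-PG) and infinite at s = exp(-PG).\<close>
definition divergence_type :: "'w measure \<Rightarrow> ('w \<Rightarrow> 'w) \<Rightarrow> ('w \<Rightarrow> enat) \<Rightarrow> ('w \<Rightarrow> nat \<Rightarrow> nat \<Rightarrow> bool)
      \<Rightarrow> ('w \<Rightarrow> seqn \<Rightarrow> real) \<Rightarrow> real \<Rightarrow> nat \<Rightarrow> ('w \<Rightarrow> seqn) \<Rightarrow> 'w set \<Rightarrow> bool" where
  "divergence_type M th ell alpha phi PG a xi Ot \<longleftrightarrow>
     [a] \<in> Wn M th ell alpha 1 \<and> xi \<in> measurable M SeqM
     \<and> (AE w in M. xi w \<in> Xfib th ell alpha w)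
     \<and> (AE w in M. w \<in> Omega_w M th ell alpha [a] \<longrightarrow> xi w \<in> cyl th ell alpha w [a])
     \<and> Ot \<in> sets M \<and> Ot \<subseteq> Omega_w M th ell alpha [a] \<and> measure M Ot > 0
     \<and> (AE w in M. (\<forall>s. 0 \<le> s \<and> s < exp (- PG) \<longrightarrow> Pser th ell alpha phi Ot xi w s < \<infinity>)
                   \<and> Pser th ell alpha phi Ot xi w (exp (- PG)) = \<infinity>)"

definition lambda_limit :: "'w measure \<Rightarrow> ('w \<Rightarrow> 'w) \<Rightarrow> ('w \<Rightarrow> enat) \<Rightarrow> ('w \<Rightarrow> nat \<Rightarrow> nat \<Rightarrow> bool)
      \<Rightarrow> ('w \<Rightarrow> seqn \<Rightarrow> real) \<Rightarrow> real \<Rightarrow> 'w set \<Rightarrow> ('w \<Rightarrow> seqn) \<Rightarrow> ('w \<Rightarrow> real) \<Rightarrow> bool" where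
  "lambda_limit M th ell alpha phi PG Ot xi lam \<longleftrightarrow>
     (\<exists>s :: nat \<Rightarrow> real. incseq s \<and> (\<forall>k. 0 < s k \<and> s k < exp (- PG)) \<and> s \<longlonglongrightarrow> exp (- PG)
        \<and> (AE w in M. 0 < lam w \<and>
             (\<lambda>k. enn2real (Pser th ell alpha phi Ot xi w (s k))
                  / enn2real (Pser th ell alpha phi Ot xi (th w) (s k))) \<longlonglongrightarrow> lam w))"

definition conformal :: "'w measure \<Rightarrow> ('w \<Rightarrow> 'w) \<Rightarrow> ('w \<Rightarrow> enat) \<Rightarrow> ('w \<Rightarrow> nat \<Rightarrow> nat \<Rightarrow> bool)
      \<Rightarrow> ('w \<Rightarrow> seqn \<Rightarrow> real) \<Rightarrow> real \<Rightarrow> ('w \<Rightarrow> real) \<Rightarrow> ('w \<Rightarrow> seqn measure) \<Rightarrow> bool" where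
  "conformal M th ell alpha phi PG lam mu \<longleftrightarrow>
     (AE w in M. prob_space (mu w) \<and> sets (mu w) = sets (restrict_space SeqM (Xfib th ell alpha w))
        \<and> (\<forall>n. \<forall>v \<in> words th ell alpha w n. measure (mu w) (cyl th ell alpha w v) > 0)
        \<and> (\<forall>c E. [c] \<in> words th ell alpha w 1 \<longrightarrow> E \<in> sets (mu w) \<longrightarrow> E \<subseteq> cyl th ell alpha w [c] \<longrightarrow>
              emeasure (mu (th w)) (shiftn 1 ` E)
                = ennreal (lam w) * (\<integral>\<^sup>+ x \<in> E. ennreal (exp (PG - phi w x)) \<partial>mu w)))"

definition Lam :: "('w \<Rightarrow> 'w) \<Rightarrow> ('w \<Rightarrow> real) \<Rightarrow> 'w \<Rightarrow> nat \<Rightarrow> real" where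
  "Lam th lam w n = (\<Prod>k<n. lam ((th ^^ k) w))"

definition big_image :: "'w measure \<Rightarrow> ('w \<Rightarrow> 'w) \<Rightarrow> ('w \<Rightarrow> enat) \<Rightarrow> ('w \<Rightarrow> nat \<Rightarrow> nat \<Rightarrow> bool)
      \<Rightarrow> 'w set \<Rightarrow> ('w \<Rightarrow> nat set) \<Rightarrow> bool" where
  "big_image M th ell alpha Obi I \<longleftrightarrow>
     Obi \<in> sets M \<and> measure M Obi > 0 \<and>
     (\<forall>w \<in> Obi. finite (I w) \<and> (\<forall>b \<in> I w. [b] \<in> words th ell alpha w 1)
        \<and> (\<forall>c. [c] \<in> words th ell alpha (thinv M th w) 1 \<longrightarrow>
               (\<exists>b \<in> I w. alpha (thinv M th w) c b)))"

definition Dfun :: "'w measure \<Rightarrow> ('w \<Rightarrow> 'w) \<Rightarrow> ('w \<Rightarrow> enat) \<Rightarrow> ('w \<Rightarrow> nat \<Rightarrow> nat \<Rightarrow> bool)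
      \<Rightarrow> ('w \<Rightarrow> seqn measure) \<Rightarrow> 'w \<Rightarrow> real" where
  "Dfun M th ell alpha mu w =
     Inf {measure (mu w) (shiftn 1 ` cyl th ell alpha (thinv M th w) [b]) | b.
            [b] \<in> words th ell alpha (thinv M th w) 1}"

end

theory Submission
  imports Defs
begin


lemma funpow_th: "(th ^^ i) (th w) = (th ^^ Suc i) w"
  by (simp add: funpow_Suc_right del: funpow.simps)

lemma shift_shift: "shiftn k (shiftn 1 x) = shiftn (Suc k) x"
  by (auto simp: shiftn_def)

lemma shift_image:
  assumes c: "enat c < ell w"
  shows "shiftn 1 ` {y \<in> Xfib th ell alpha w. y 0 = c \<and> R (shiftn 1 y)}
       = {z \<in> Xfib th ell alpha (th w). alpha w c (z 0) \<and> R z}"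
proof
  show "shiftn 1 ` {y \<in> Xfib th ell alpha w. y 0 = c \<and> R (shiftn 1 y)}
       \<subseteq> {z \<in> Xfib th ell alpha (th w). alpha w c (z 0) \<and> R z}"
  proof (rule subsetI, elim imageE)
    fix z y assume yy: "y \<in> {y \<in> Xfib th ell alpha w. y 0 = c \<and> R (shiftn 1 y)}" and zy: "z = shiftn 1 y"
    from yy have y: "y \<in> Xfib th ell alpha w" "y 0 = c" "R (shiftn 1 y)" by auto
    have "\<forall>i. enat (y (Suc i)) < ell ((th ^^ i) (th w)) \<and> alpha ((th ^^ i) (th w)) (y (Suc i)) (y (Suc (Suc i)))"
      using y(1) unfolding Xfib_def funpow_th by blast
    moreover have "alpha w c (y 1)" using y(1,2) unfolding Xfib_def by (auto dest: spec[of _ 0])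
    ultimately show "z \<in> {z \<in> Xfib th ell alpha (th w). alpha w c (z 0) \<and> R z}"
      using y(3) unfolding zy by (simp add: Xfib_def shiftn_def)
  qed
next
  show "{z \<in> Xfib th ell alpha (th w). alpha w c (z 0) \<and> R z}
     \<subseteq> shiftn 1 ` {y \<in> Xfib th ell alpha w. y 0 = c \<and> R (shiftn 1 y)}"
  proof (rule subsetI)
    fix z assume "z \<in> {z \<in> Xfib th ell alpha (th w). alpha w c (z 0) \<and> R z}"
    then have z: "z \<in> Xfib th ell alpha (th w)" "alpha w c (z 0)" "R z" by auto
    define y where "y = (\<lambda>i. if i = 0 then c else z (i - 1))"
    have sy: "shiftn 1 y = z" by (auto simp: y_def shiftn_def)
    have "y \<in> Xfib th ell alpha w"
      unfolding Xfib_def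
    proof (clarify)
      fix i show "enat (y i) < ell ((th ^^ i) w) \<and> alpha ((th ^^ i) w) (y i) (y (Suc i))"
      proof (cases i)
        case 0 then show ?thesis using c z(2) by (simp add: y_def)
      next
        case (Suc j)
        then show ?thesis using z(1) unfolding Xfib_def y_def by (simp add: funpow_th)
      qed
    qed
    then show "z \<in> shiftn 1 ` {y \<in> Xfib th ell alpha w. y 0 = c \<and> R (shiftn 1 y)}"
      using sy z(3) by (intro image_eqI[of _ _ y]) (auto simp: y_def)
  qed
qed

lemma cyl_Cons:
  "cyl th ell alpha w (c # v) = {y \<in> Xfib th ell alpha w. y 0 = c \<and> (\<lambda>z. \<forall>i<length v. z i = v ! i) (shiftn 1 y)}"
  unfolding cyl_def shiftn_def by (simp add: All_less_Suc2)

lemma words_Cons: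
  assumes "c # v \<in> words th ell alpha w (Suc m)"
  shows "v \<in> words th ell alpha (th w) m" "enat c < ell w"
    "m > 0 \<Longrightarrow> alpha w c (v ! 0)"
proof -
  show "v \<in> words th ell alpha (th w) m"
    using assms unfolding words_def mem_Collect_eq
  proof (intro conjI allI impI)
    assume a: "length (c # v) = Suc m \<and> (\<forall>i<Suc m. enat ((c # v) ! i) < ell ((th ^^ i) w)) \<and>
      (\<forall>i. Suc i < Suc m \<longrightarrow> alpha ((th ^^ i) w) ((c # v) ! i) ((c # v) ! Suc i))"
    then show "length v = m" by simp
    fix i
    show "i < m \<Longrightarrow> enat (v ! i) < ell ((th ^^ i) (th w))"
      using a[THEN conjunct2, THEN conjunct1, rule_format, of "Suc i"] by (simp add: funpow_th)
    show "Suc i < m \<Longrightarrow> alpha ((th ^^ i) (th w)) (v ! i) (v ! Suc i)"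
      using a[THEN conjunct2, THEN conjunct2, rule_format, of "Suc i"] by (simp add: funpow_th)
  qed
  show "enat c < ell w" using assms unfolding words_def by force
  show "m > 0 \<Longrightarrow> alpha w c (v ! 0)" using assms unfolding words_def
    by (auto dest: spec[of _ 0])
qed

lemma shift_cyl_Cons:
  assumes "c # v \<in> words th ell alpha w (Suc m)" "m > 0"
  shows "shiftn 1 ` cyl th ell alpha w (c # v) = cyl th ell alpha (th w) v"
proof -
  have l: "length v = m" using assms unfolding words_def by auto
  have "shiftn 1 ` cyl th ell alpha w (c # v) = {z \<in> Xfib th ell alpha (th w). alpha w c (z 0) \<and> (\<forall>i<length v. z i = v ! i)}"
    unfolding cyl_Cons by (rule shift_image[where th=th and alpha=alpha and ell=ell and w=w and c=c, OF words_Cons(2)[OF assms(1)]])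
  also have "\<dots> = cyl th ell alpha (th w) v"
    using words_Cons(3)[OF assms] l assms(2) unfolding cyl_def by auto
  finally show ?thesis .
qed

lemma shift_cyl_single:
  assumes "enat c < ell w"
  shows "shiftn 1 ` cyl th ell alpha w [c] = {z \<in> Xfib th ell alpha (th w). alpha w c (z 0)}"
proof -
  have "cyl th ell alpha w [c] = {y \<in> Xfib th ell alpha w. y 0 = c \<and> (\<lambda>z. True) (shiftn 1 y)}"
    unfolding cyl_def by auto
  then show ?thesis using shift_image[where th=th and alpha=alpha and ell=ell and w=w and c=c and R="\<lambda>z. True", OF assms] by simp
qed

lemma shift_shift0: "shiftn k (shiftn (Suc 0) x) = shiftn (Suc k) x"
  by (auto simp: shiftn_def)

lemma phin_Suc: "phin phi th w (Suc m) x = phi w x + phin phi th (th w) m (shiftn 1 x)"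
  unfolding phin_def sum.lessThan_Suc_shift
  by (simp add: funpow_th shift_shift0 shiftn_def[of 0] del: funpow.simps)



lemma cyl_pred: "{x \<in> space SeqM. \<forall>i<length v. x i = v ! i} \<in> sets SeqM"
  unfolding SeqM_def by measurable

lemma alpha_pred: "{z \<in> space SeqM. P (z 0)} \<in> sets SeqM"
  unfolding SeqM_def by measurable

lemma space_SeqM: "space SeqM = UNIV"
  unfolding SeqM_def by (simp add: space_PiM)

lemma cyl_sets: "cyl th ell alpha w v \<in> sets (restrict_space SeqM (Xfib th ell alpha w))"
proof -
  have "cyl th ell alpha w v = Xfib th ell alpha w \<inter> {x \<in> space SeqM. \<forall>i<length v. x i = v ! i}"
    unfolding cyl_def space_SeqM by auto
  then show ?thesis using cyl_pred unfolding sets_restrict_space by blast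
qed

lemma alpha_sets: "{z \<in> Xfib th ell alpha w. P (z 0)} \<in> sets (restrict_space SeqM (Xfib th ell alpha w))"
proof -
  have "{z \<in> Xfib th ell alpha w. P (z 0)} = Xfib th ell alpha w \<inter> {z \<in> space SeqM. P (z 0)}"
    unfolding space_SeqM by auto
  then show ?thesis using alpha_pred unfolding sets_restrict_space by blast
qed

lemma conf_step:
  assumes p1: "prob_space (mu w)" and p2: "prob_space (mu (th w))"
    and conf: "emeasure (mu (th w)) (shiftn 1 ` S) = ennreal (lam w) * (\<integral>\<^sup>+ x \<in> S. ennreal (exp (PG - phi w x)) \<partial>mu w)"
    and lam: "0 < lam w" and S: "S \<in> sets (mu w)" and x: "x \<in> S"
    and var: "\<forall>y\<in>S. \<bar>phi w y - phi w x\<bar> \<le> d"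
  shows "measure (mu (th w)) (shiftn 1 ` S) \<le> exp d * lam w * exp (PG - phi w x) * measure (mu w) S"
    and "exp (- d) * lam w * exp (PG - phi w x) * measure (mu w) S \<le> measure (mu (th w)) (shiftn 1 ` S)"
proof -
  interpret P1: prob_space "mu w" by (rule p1)
  interpret P2: prob_space "mu (th w)" by (rule p2)
  let ?K = "exp (PG - phi w x + d)"
  let ?k = "exp (PG - phi w x - d)"
  have up: "(\<integral>\<^sup>+ y \<in> S. ennreal (exp (PG - phi w y)) \<partial>mu w) \<le> (\<integral>\<^sup>+ y. ennreal ?K * indicator S y \<partial>mu w)"
  proof (rule nn_integral_mono)
    fix y assume "y \<in> space (mu w)"
    show "ennreal (exp (PG - phi w y)) * indicator S y \<le> ennreal ?K * indicator S y"
    proof (cases "y \<in> S")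
      case True
      then have "exp (PG - phi w y) \<le> ?K" using var by auto
      then show ?thesis using True by (simp add: ennreal_leI)
    qed simp
  qed
  have lo: "(\<integral>\<^sup>+ y. ennreal ?k * indicator S y \<partial>mu w) \<le> (\<integral>\<^sup>+ y \<in> S. ennreal (exp (PG - phi w y)) \<partial>mu w)"
  proof (rule nn_integral_mono)
    fix y assume "y \<in> space (mu w)"
    show "ennreal ?k * indicator S y \<le> ennreal (exp (PG - phi w y)) * indicator S y"
    proof (cases "y \<in> S")
      case True
      then have "?k \<le> exp (PG - phi w y)" using var by (auto simp: abs_le_iff)
      then show ?thesis using True by (simp add: ennreal_leI)
    qed simp
  qed
  have e1: "(\<integral>\<^sup>+ y. ennreal ?K * indicator S y \<partial>mu w) = ennreal (?K * measure (mu w) S)"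
    using S by (simp add: nn_integral_cmult_indicator P1.emeasure_eq_measure ennreal_mult)
  have e2: "(\<integral>\<^sup>+ y. ennreal ?k * indicator S y \<partial>mu w) = ennreal (?k * measure (mu w) S)"
    using S by (simp add: nn_integral_cmult_indicator P1.emeasure_eq_measure ennreal_mult)
  have "ennreal (measure (mu (th w)) (shiftn 1 ` S)) = ennreal (lam w) * (\<integral>\<^sup>+ x \<in> S. ennreal (exp (PG - phi w x)) \<partial>mu w)"
    using conf P2.emeasure_eq_measure by simp
  also have "\<dots> \<le> ennreal (lam w) * ennreal (?K * measure (mu w) S)"
    using up e1 by (intro mult_left_mono) auto
  finally have "ennreal (measure (mu (th w)) (shiftn 1 ` S)) \<le> ennreal (lam w) * ennreal (?K * measure (mu w) S)" .
  then have "measure (mu (th w)) (shiftn 1 ` S) \<le> lam w * (?K * measure (mu w) S)"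
    using lam by (simp add: ennreal_mult[symmetric] ennreal_le_iff)
  then show "measure (mu (th w)) (shiftn 1 ` S) \<le> exp d * lam w * exp (PG - phi w x) * measure (mu w) S"
    by (simp add: exp_add mult_ac)
  have "ennreal (lam w) * ennreal (?k * measure (mu w) S) \<le> ennreal (lam w) * (\<integral>\<^sup>+ x \<in> S. ennreal (exp (PG - phi w x)) \<partial>mu w)"
    using lo e2 by (intro mult_left_mono) auto
  also have "\<dots> = ennreal (measure (mu (th w)) (shiftn 1 ` S))"
    using conf P2.emeasure_eq_measure by simp
  finally have "ennreal (lam w) * ennreal (?k * measure (mu w) S) \<le> ennreal (measure (mu (th w)) (shiftn 1 ` S))" .
  then have "lam w * (?k * measure (mu w) S) \<le> measure (mu (th w)) (shiftn 1 ` S)"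
    using lam by (simp add: ennreal_mult[symmetric] ennreal_le_iff)
  then show "exp (- d) * lam w * exp (PG - phi w x) * measure (mu w) S \<le> measure (mu (th w)) (shiftn 1 ` S)"
    by (simp add: exp_diff exp_minus exp_add field_simps mult_ac)
qed



lemma Var_le:
  assumes "x \<in> Xfib th ell alpha w" "y \<in> Xfib th ell alpha w" "\<forall>i<j. x i = y i"
    and "Var th ell alpha phi w j \<le> ereal K"
  shows "\<bar>phi w y - phi w x\<bar> \<le> K"
proof -
  have "ereal \<bar>phi w (fst (x,y)) - phi w (snd (x,y))\<bar> \<le> Var th ell alpha phi w j"
    unfolding Var_def by (rule SUP_upper) (use assms in auto)
  then have "ereal \<bar>phi w x - phi w y\<bar> \<le> Var th ell alpha phi w j" by simp
  then have "ereal \<bar>phi w x - phi w y\<bar> \<le> ereal K" using assms(4) by (rule order_trans)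
  then show ?thesis by (simp add: abs_minus_commute)
qed

definition Err :: "('w \<Rightarrow> 'w) \<Rightarrow> ('w \<Rightarrow> real) \<Rightarrow> real \<Rightarrow> 'w \<Rightarrow> nat \<Rightarrow> real" where
  "Err th kappa r w n = (\<Sum>j<n. kappa ((th ^^ (n - 1 - j)) w) * r ^ Suc j)"

lemma Err_Suc: "Err th kappa r w (Suc n) = kappa w * r ^ Suc n + Err th kappa r (th w) n"
proof -
  have "(\<Sum>j<n. kappa ((th ^^ (Suc n - 1 - j)) w) * r ^ Suc j) = (\<Sum>j<n. kappa ((th ^^ (n - 1 - j)) (th w)) * r ^ Suc j)"
  proof (rule sum.cong)
    fix j assume "j \<in> {..<n}"
    then have "Suc n - 1 - j = Suc (n - 1 - j)" by auto
    then show "kappa ((th ^^ (Suc n - 1 - j)) w) * r ^ Suc j = kappa ((th ^^ (n - 1 - j)) (th w)) * r ^ Suc j"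
      by (simp only: funpow_th)
  qed simp
  then show ?thesis unfolding Err_def by (simp add: sum.lessThan_Suc)
qed

lemma Lam_Suc: "Lam th lam w (Suc n) = lam w * Lam th lam (th w) n"
  unfolding Lam_def prod.lessThan_Suc_shift by (simp only: funpow_th funpow_0)

lemma core:
  assumes pr: "\<And>k. prob_space (mu ((th ^^ k) w))"
    and conf: "\<And>k c E. [c] \<in> words th ell alpha ((th ^^ k) w) 1 \<Longrightarrow> E \<in> sets (mu ((th ^^ k) w)) \<Longrightarrow>
         E \<subseteq> cyl th ell alpha ((th ^^ k) w) [c] \<Longrightarrow>
         emeasure (mu (th ((th ^^ k) w))) (shiftn 1 ` E)
           = ennreal (lam ((th ^^ k) w)) * (\<integral>\<^sup>+ x \<in> E. ennreal (exp (PG - phi ((th ^^ k) w) x)) \<partial>mu ((th ^^ k) w))"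
    and st: "\<And>k. sets (mu ((th ^^ k) w)) = sets (restrict_space SeqM (Xfib th ell alpha ((th ^^ k) w)))"
    and var: "\<And>k j. 1 \<le> j \<Longrightarrow> Var th ell alpha phi ((th ^^ k) w) j \<le> ereal (kappa ((th ^^ k) w) * r ^ j)"
    and lam: "\<And>k. 0 < lam ((th ^^ k) w)"
    and v: "v \<in> words th ell alpha w (Suc m)" and x: "x \<in> cyl th ell alpha w v"
  shows "measure (mu ((th ^^ Suc m) w)) (shiftn 1 ` cyl th ell alpha ((th ^^ m) w) [v ! m])
      \<le> exp (Err th kappa r w (Suc m)) * Lam th lam w (Suc m) * measure (mu w) (cyl th ell alpha w v)
          * exp (real (Suc m) * PG - phin phi th w (Suc m) x)
    \<and> exp (- Err th kappa r w (Suc m)) * Lam th lam w (Suc m) * measure (mu w) (cyl th ell alpha w v)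
          * exp (real (Suc m) * PG - phin phi th w (Suc m) x)
      \<le> measure (mu ((th ^^ Suc m) w)) (shiftn 1 ` cyl th ell alpha ((th ^^ m) w) [v ! m])"
  using assms
proof (induction m arbitrary: w v x)
  case 0
  have "length v = 1" using "0.prems"(6) unfolding words_def by simp
  then obtain c where vc: "v = [c]" by (cases v) auto
  let ?S = "cyl th ell alpha w [c]"
  have S: "?S \<in> sets (mu w)" using "0.prems"(3)[of 0] cyl_sets by simp
  have xS: "x \<in> ?S" using "0.prems"(7) vc by simp
  have V1: "Var th ell alpha phi w 1 \<le> ereal (kappa w * r)" using "0.prems"(4)[of 1 0] by simp
  have vr: "\<forall>y\<in>?S. \<bar>phi w y - phi w x\<bar> \<le> kappa w * r"
  proof
    fix y assume "y \<in> ?S"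
    then show "\<bar>phi w y - phi w x\<bar> \<le> kappa w * r"
      using xS V1 by (intro Var_le[of x th ell alpha w y 1]) (auto simp: cyl_def)
  qed
  have cf: "emeasure (mu (th w)) (shiftn 1 ` ?S) = ennreal (lam w) * (\<integral>\<^sup>+ x \<in> ?S. ennreal (exp (PG - phi w x)) \<partial>mu w)"
    using "0.prems"(2)[of c 0 ?S] "0.prems"(6) vc S by simp
  have p1: "prob_space (mu w)" and p2: "prob_space (mu (th w))" using "0.prems"(1)[of 0] "0.prems"(1)[of 1] by auto
  have l0: "0 < lam w" using "0.prems"(5)[of 0] by simp
  note cs = conf_step[where mu=mu and w=w and th=th and lam=lam and PG=PG and phi=phi, OF p1 p2 cf l0 S xS vr]
  show ?case using cs vc
    by (simp add: Err_def Lam_def phin_def shiftn_def[of 0] mult_ac)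
next
  case (Suc m)
  have "length v = Suc (Suc m)" using Suc.prems(6) unfolding words_def by simp
  then obtain c v' where vc: "v = c # v'" by (cases v) auto
  have w1: "c # v' \<in> words th ell alpha w (Suc (Suc m))" using Suc.prems(6) vc by simp
  have v': "v' \<in> words th ell alpha (th w) (Suc m)" by (rule words_Cons(1)[OF w1])
  let ?S = "cyl th ell alpha w v"
  have S: "?S \<in> sets (mu w)" using Suc.prems(3)[of 0] cyl_sets by simp
  have xS: "x \<in> ?S" using Suc.prems(7) by simp
  have lv: "length v = Suc (Suc m)" using Suc.prems(6) unfolding words_def by simp
  have V1: "Var th ell alpha phi w (Suc (Suc m)) \<le> ereal (kappa w * r ^ Suc (Suc m))"
    using Suc.prems(4)[of "Suc (Suc m)" 0] by simp
  have vr: "\<forall>y\<in>?S. \<bar>phi w y - phi w x\<bar> \<le> kappa w * r ^ Suc (Suc m)"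
  proof
    fix y assume "y \<in> ?S"
    then show "\<bar>phi w y - phi w x\<bar> \<le> kappa w * r ^ Suc (Suc m)"
      using xS V1 lv by (intro Var_le[of x th ell alpha w y "Suc (Suc m)"]) (auto simp: cyl_def)
  qed
  have c1: "[c] \<in> words th ell alpha w 1" using w1 unfolding words_def by auto
  have sub: "?S \<subseteq> cyl th ell alpha w [c]" using vc by (auto simp: cyl_def)
  have cf: "emeasure (mu (th w)) (shiftn 1 ` ?S) = ennreal (lam w) * (\<integral>\<^sup>+ x \<in> ?S. ennreal (exp (PG - phi w x)) \<partial>mu w)"
    using Suc.prems(2)[of c 0 ?S] c1 S sub by simp
  have p1: "prob_space (mu w)" and p2: "prob_space (mu (th w))" using Suc.prems(1)[of 0] Suc.prems(1)[of 1] by auto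
  have l0: "0 < lam w" using Suc.prems(5)[of 0] by simp
  note cs = conf_step[where mu=mu and w=w and th=th and lam=lam and PG=PG and phi=phi, OF p1 p2 cf l0 S xS vr]
  have img: "shiftn 1 ` ?S = cyl th ell alpha (th w) v'" using shift_cyl_Cons[OF w1] vc by simp
  have x': "shiftn 1 x \<in> cyl th ell alpha (th w) v'" using xS img by blast
  have IH: "?case" if False using that by simp
  have pr': "\<And>k. prob_space (mu ((th ^^ k) (th w)))" by (simp only: funpow_th Suc.prems(1))
  have cf': "\<And>k c E. [c] \<in> words th ell alpha ((th ^^ k) (th w)) 1 \<Longrightarrow> E \<in> sets (mu ((th ^^ k) (th w))) \<Longrightarrow>
         E \<subseteq> cyl th ell alpha ((th ^^ k) (th w)) [c] \<Longrightarrow>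
         emeasure (mu (th ((th ^^ k) (th w)))) (shiftn 1 ` E)
           = ennreal (lam ((th ^^ k) (th w))) * (\<integral>\<^sup>+ x \<in> E. ennreal (exp (PG - phi ((th ^^ k) (th w)) x)) \<partial>mu ((th ^^ k) (th w)))"
    by (simp only: funpow_th Suc.prems(2))
  have st': "\<And>k. sets (mu ((th ^^ k) (th w))) = sets (restrict_space SeqM (Xfib th ell alpha ((th ^^ k) (th w))))"
    by (simp only: funpow_th Suc.prems(3))
  have var': "\<And>k j. 1 \<le> j \<Longrightarrow> Var th ell alpha phi ((th ^^ k) (th w)) j \<le> ereal (kappa ((th ^^ k) (th w)) * r ^ j)"
    by (simp only: funpow_th Suc.prems(4))
  have lam': "\<And>k. 0 < lam ((th ^^ k) (th w))" by (simp only: funpow_th Suc.prems(5))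
  note ih = Suc.IH[OF pr' cf' st' var' lam' v' x']
  let ?Q = "measure (mu ((th ^^ Suc (Suc m)) w)) (shiftn 1 ` cyl th ell alpha ((th ^^ Suc m) w) [v ! Suc m])"
  have Qeq: "measure (mu ((th ^^ Suc m) (th w))) (shiftn 1 ` cyl th ell alpha ((th ^^ m) (th w)) [v' ! m]) = ?Q"
    using vc by (simp only: funpow_th nth_Cons_Suc)
  let ?A = "measure (mu (th w)) (cyl th ell alpha (th w) v')"
  let ?a = "lam w * exp (PG - phi w x) * measure (mu w) ?S"
  let ?b = "Lam th lam (th w) (Suc m) * exp (real (Suc m) * PG - phin phi th (th w) (Suc m) (shiftn 1 x))"
  let ?E = "Err th kappa r (th w) (Suc m)"
  let ?d = "kappa w * r ^ Suc (Suc m)"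
  have Lpos: "0 \<le> Lam th lam (th w) (Suc m)" unfolding Lam_def using lam' by (simp add: less_imp_le prod_nonneg)
  then have bpos: "0 \<le> ?b" by simp
  have apos: "0 \<le> ?a" using l0 by simp
  have A1: "?A \<le> exp ?d * ?a" using cs(1) by (simp only: img mult.assoc)
  have A2: "exp (- ?d) * ?a \<le> ?A" using cs(2) by (simp only: img mult.assoc)
  have Q1: "?Q \<le> exp ?E * ?b * ?A"
  proof -
    have "?Q = measure (mu ((th ^^ Suc m) (th w))) (shiftn 1 ` cyl th ell alpha ((th ^^ m) (th w)) [v' ! m])"
      using Qeq by (rule sym)
    also have "\<dots> \<le> exp ?E * Lam th lam (th w) (Suc m) * ?A * exp (real (Suc m) * PG - phin phi th (th w) (Suc m) (shiftn 1 x))"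
      using ih by (rule conjunct1)
    also have "\<dots> = exp ?E * ?b * ?A" by (simp only: mult_ac)
    finally show ?thesis .
  qed
  have Q2: "exp (- ?E) * ?b * ?A \<le> ?Q"
  proof -
    have "exp (- ?E) * ?b * ?A = exp (- ?E) * Lam th lam (th w) (Suc m) * ?A * exp (real (Suc m) * PG - phin phi th (th w) (Suc m) (shiftn 1 x))"
      by (simp only: mult_ac)
    also have "\<dots> \<le> measure (mu ((th ^^ Suc m) (th w))) (shiftn 1 ` cyl th ell alpha ((th ^^ m) (th w)) [v' ! m])"
      using ih by (rule conjunct2)
    also have "\<dots> = ?Q" using Qeq .
    finally show ?thesis .
  qed
  have le1: "?Q \<le> exp ?E * ?b * (exp ?d * ?a)"
    using order_trans[OF Q1 mult_left_mono[OF A1, of "exp ?E * ?b"]] bpos by simp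
  have le2: "exp (- ?E) * ?b * (exp (- ?d) * ?a) \<le> ?Q"
    using order_trans[OF mult_left_mono[OF A2, of "exp (- ?E) * ?b"] Q2] bpos by simp
  have ex: "exp (real (Suc (Suc m)) * PG - phin phi th w (Suc (Suc m)) x)
      = exp (PG - phi w x) * exp (real (Suc m) * PG - phin phi th (th w) (Suc m) (shiftn 1 x))"
    unfolding phin_Suc[of phi th w "Suc m"] exp_add[symmetric] by (simp add: algebra_simps)
  have eq1: "exp ?E * ?b * (exp ?d * ?a) = exp (Err th kappa r w (Suc (Suc m))) * Lam th lam w (Suc (Suc m)) * measure (mu w) ?S
          * exp (real (Suc (Suc m)) * PG - phin phi th w (Suc (Suc m)) x)"
    unfolding ex Err_Suc[of th kappa r w "Suc m"] Lam_Suc exp_add by (simp only: mult_ac)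
  have eq2: "exp (- ?E) * ?b * (exp (- ?d) * ?a) = exp (- Err th kappa r w (Suc (Suc m))) * Lam th lam w (Suc (Suc m)) * measure (mu w) ?S
          * exp (real (Suc (Suc m)) * PG - phin phi th w (Suc (Suc m)) x)"
    unfolding ex Err_Suc[of th kappa r w "Suc m"] Lam_Suc minus_add_distrib exp_add by (simp only: mult_ac)
  show ?case
  proof
    show "?Q \<le> exp (Err th kappa r w (Suc (Suc m))) * Lam th lam w (Suc (Suc m)) * measure (mu w) ?S
          * exp (real (Suc (Suc m)) * PG - phin phi th w (Suc (Suc m)) x)"
      using le1 eq1 by (rule ord_le_eq_trans)
    show "exp (- Err th kappa r w (Suc (Suc m))) * Lam th lam w (Suc (Suc m)) * measure (mu w) ?S
          * exp (real (Suc (Suc m)) * PG - phin phi th w (Suc (Suc m)) x) \<le> ?Q"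
      using eq2[symmetric] le2 by (rule ord_eq_le_trans)
  qed
qed



lemma AE_iter:
  assumes th: "th \<in> measurable M M" and d: "distr M M th = M" and ae: "AE w in M. P w"
  shows "AE w in M. \<forall>k. P ((th ^^ k) w)"
proof -
  have "AE w in M. P ((th ^^ k) w)" for k
  proof (induction k)
    case 0 then show ?case using ae by simp
  next
    case (Suc k)
    have "AE w in distr M M th. P ((th ^^ k) w)" unfolding d by (rule Suc.IH)
    then have "AE w in M. P ((th ^^ k) (th w))" by (rule AE_distrD[OF th])
    then show ?case by (simp only: funpow_th)
  qed
  then show ?thesis by (simp add: AE_all_countable)
qed

lemma funpow_space: "th \<in> measurable M M \<Longrightarrow> w \<in> space M \<Longrightarrow> (th ^^ k) w \<in> space M"
  using measurable_space[OF measurable_compose_n[of th M k]] by blast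

lemma thinv_th: "bij_betw th (space M) (space M) \<Longrightarrow> w \<in> space M \<Longrightarrow> thinv M th (th w) = w"
  unfolding thinv_def by (simp add: bij_betw_def inv_into_f_f)

lemma th_thinv: "bij_betw th (space M) (space M) \<Longrightarrow> w \<in> space M \<Longrightarrow> th (thinv M th w) = w"
  unfolding thinv_def by (simp add: bij_betw_def f_inv_into_f)

lemma thinv_iter:
  assumes b: "bij_betw th (space M) (space M)" and th: "th \<in> measurable M M" and w: "w \<in> space M"
  shows "j \<le> n \<Longrightarrow> (thinv M th ^^ j) ((th ^^ n) w) = (th ^^ (n - j)) w"
proof (induction j)
  case 0 then show ?case by simp
next
  case (Suc j)
  then have e: "n - j = Suc (n - Suc j)" by auto
  have "(thinv M th ^^ Suc j) ((th ^^ n) w) = thinv M th ((th ^^ (n - j)) w)" using Suc by simp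
  also have "\<dots> = thinv M th (th ((th ^^ (n - Suc j)) w))" by (simp only: e funpow.simps comp_def)
  also have "\<dots> = (th ^^ (n - Suc j)) w" using thinv_th[OF b funpow_space[OF th w]] .
  finally show ?case .
qed

lemma Err_le_logB:
  assumes b: "bij_betw th (space M) (space M)" and th: "th \<in> measurable M M" and w: "w \<in> space M"
    and kp: "\<forall>u \<in> space M. 1 \<le> kappa u" and r: "0 < r"
    and fin: "logB M th kappa r ((th ^^ n) w) \<noteq> \<infinity>"
  shows "Err th kappa r w n \<le> enn2real (logB M th kappa r ((th ^^ n) w))"
proof -
  have t: "(thinv M th ^^ Suc j) ((th ^^ n) w) = (th ^^ (n - 1 - j)) w" if "j < n" for j
    using thinv_iter[OF b th w, of "Suc j" n] that by simp
  have nn: "0 \<le> kappa ((th ^^ k) w) * r ^ Suc j" for k j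
  proof -
    have "1 \<le> kappa ((th ^^ k) w)" using kp funpow_space[OF th w, of k] by blast
    then show ?thesis using r by (simp add: less_imp_le)
  qed
  have "ennreal (Err th kappa r w n) = (\<Sum>j<n. ennreal (kappa ((th ^^ (n - 1 - j)) w) * r ^ Suc j))"
    unfolding Err_def using nn by (simp add: sum_ennreal)
  also have "\<dots> = (\<Sum>j<n. ennreal (kappa ((thinv M th ^^ Suc j) ((th ^^ n) w)) * r ^ Suc j))"
  proof (rule sum.cong)
    fix j assume "j \<in> {..<n}"
    then have "j < n" by simp
    show "ennreal (kappa ((th ^^ (n - 1 - j)) w) * r ^ Suc j) = ennreal (kappa ((thinv M th ^^ Suc j) ((th ^^ n) w)) * r ^ Suc j)"
      by (simp only: t[OF \<open>j < n\<close>])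
  qed simp
  also have "\<dots> \<le> logB M th kappa r ((th ^^ n) w)"
    unfolding logB_def by (rule sum_le_suminf) (auto simp: summableI)
  finally have "ennreal (Err th kappa r w n) \<le> logB M th kappa r ((th ^^ n) w)" .
  moreover have "0 \<le> Err th kappa r w n" unfolding Err_def using nn by (simp add: sum_nonneg)
  ultimately show ?thesis using fin enn2real_mono[of "ennreal (Err th kappa r w n)" "logB M th kappa r ((th ^^ n) w)"]
    by (simp add: top.not_eq_extremum)
qed

lemma logB_meas:
  assumes th: "thinv M th \<in> measurable M M" and k: "kappa \<in> borel_measurable M"
  shows "logB M th kappa r \<in> borel_measurable M"
proof -
  have "(\<lambda>w. ennreal (kappa ((thinv M th ^^ Suc j) w) * r ^ Suc j)) \<in> borel_measurable M" for j
    using measurable_compose[OF measurable_compose_n[OF th] k] by measurable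
  then show ?thesis unfolding logB_def[abs_def] by measurable
qed



lemma bound1:
  assumes b: "bij_betw th (space M) (space M)" and th: "th \<in> measurable M M" and ws: "w \<in> space M"
    and kp: "\<forall>u \<in> space M. 1 \<le> kappa u" and r: "0 < r"
    and pr: "\<And>k. prob_space (mu ((th ^^ k) w))"
    and conf: "\<And>k c E. [c] \<in> words th ell alpha ((th ^^ k) w) 1 \<Longrightarrow> E \<in> sets (mu ((th ^^ k) w)) \<Longrightarrow>
         E \<subseteq> cyl th ell alpha ((th ^^ k) w) [c] \<Longrightarrow>
         emeasure (mu (th ((th ^^ k) w))) (shiftn 1 ` E)
           = ennreal (lam ((th ^^ k) w)) * (\<integral>\<^sup>+ x \<in> E. ennreal (exp (PG - phi ((th ^^ k) w) x)) \<partial>mu ((th ^^ k) w))"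
    and st: "\<And>k. sets (mu ((th ^^ k) w)) = sets (restrict_space SeqM (Xfib th ell alpha ((th ^^ k) w)))"
    and var: "\<And>k j. 1 \<le> j \<Longrightarrow> Var th ell alpha phi ((th ^^ k) w) j \<le> ereal (kappa ((th ^^ k) w) * r ^ j)"
    and lam: "\<And>k. 0 < lam ((th ^^ k) w)"
    and fin: "\<And>k. logB M th kappa r ((th ^^ k) w) \<noteq> \<infinity>"
    and n: "1 \<le> n" and v: "v \<in> words th ell alpha w n" and x: "x \<in> cyl th ell alpha w v"
  shows "measure (mu ((th ^^ n) w)) (shiftn 1 ` cyl th ell alpha ((th ^^ (n - 1)) w) [v ! (n - 1)])
          / Bfun M th kappa r ((th ^^ n) w)
        \<le> Lam th lam w n * measure (mu w) (cyl th ell alpha w v) / exp (phin phi th w n x - real n * PG)"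
    and "Lam th lam w n * measure (mu w) (cyl th ell alpha w v) / exp (phin phi th w n x - real n * PG)
        \<le> Bfun M th kappa r ((th ^^ n) w)
          * measure (mu ((th ^^ n) w)) (shiftn 1 ` cyl th ell alpha ((th ^^ (n - 1)) w) [v ! (n - 1)])"
proof -
  obtain m where nm: "n = Suc m" using n by (cases n) auto
  let ?Q = "measure (mu ((th ^^ n) w)) (shiftn 1 ` cyl th ell alpha ((th ^^ (n - 1)) w) [v ! (n - 1)])"
  let ?Mid = "Lam th lam w n * measure (mu w) (cyl th ell alpha w v) * exp (real n * PG - phin phi th w n x)"
  let ?Er = "Err th kappa r w n"
  let ?LB = "enn2real (logB M th kappa r ((th ^^ n) w))"
  have c: "?Q \<le> exp ?Er * ?Mid \<and> exp (- ?Er) * ?Mid \<le> ?Q"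
  proof -
    have vS: "v \<in> words th ell alpha w (Suc m)" using v nm by simp
    show ?thesis using core[OF pr conf st var lam vS x] unfolding nm diff_Suc_1 by (simp only: mult.assoc)
  qed
  have ErLB: "?Er \<le> ?LB" by (rule Err_le_logB[OF b th ws kp r fin])
  have B: "Bfun M th kappa r ((th ^^ n) w) = exp ?LB" unfolding Bfun_def ..
  have Lpos: "0 \<le> Lam th lam w n" unfolding Lam_def using lam by (simp add: less_imp_le prod_nonneg)
  have Mpos: "0 \<le> ?Mid" using Lpos by (intro mult_nonneg_nonneg) auto
  have Qpos: "0 \<le> ?Q" by (rule measure_nonneg)
  have mid: "Lam th lam w n * measure (mu w) (cyl th ell alpha w v) / exp (phin phi th w n x - real n * PG) = ?Mid"
    by (simp add: exp_diff)
  have "?Q \<le> exp ?LB * ?Mid"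
    using c mult_right_mono[OF iffD2[OF exp_le_cancel_iff ErLB] Mpos] by linarith
  then show "?Q / Bfun M th kappa r ((th ^^ n) w)
        \<le> Lam th lam w n * measure (mu w) (cyl th ell alpha w v) / exp (phin phi th w n x - real n * PG)"
    unfolding mid B by (simp add: pos_divide_le_eq mult.commute)
  have "?Mid = exp ?Er * (exp (- ?Er) * ?Mid)" by (simp add: mult.assoc[symmetric] exp_add[symmetric])
  also have "\<dots> \<le> exp ?Er * ?Q" using c by (intro mult_left_mono) auto
  also have "\<dots> \<le> exp ?LB * ?Q" using mult_right_mono[OF iffD2[OF exp_le_cancel_iff ErLB] Qpos] .
  finally show "Lam th lam w n * measure (mu w) (cyl th ell alpha w v) / exp (phin phi th w n x - real n * PG)
        \<le> Bfun M th kappa r ((th ^^ n) w) * ?Q"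
    unfolding mid B .
qed

lemma D_pos:
  assumes b: "bij_betw th (space M) (space M)" and ti: "thinv M th \<in> measurable M M" and ws: "w \<in> space M"
    and ell1: "\<forall>u \<in> space M. 1 < ell u"
    and p: "prob_space (mu w)" and st: "sets (mu w) = sets (restrict_space SeqM (Xfib th ell alpha w))"
    and pos: "\<forall>n. \<forall>v \<in> words th ell alpha w n. measure (mu w) (cyl th ell alpha w v) > 0"
    and fI: "finite (I w)" and Iw: "\<forall>b \<in> I w. [b] \<in> words th ell alpha w 1"
    and bi: "\<forall>c. [c] \<in> words th ell alpha (thinv M th w) 1 \<longrightarrow> (\<exists>b \<in> I w. alpha (thinv M th w) c b)"
  shows "Dfun M th ell alpha mu w > 0"
proof -
  interpret P: prob_space "mu w" by (rule p)
  let ?u = "thinv M th w"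
  have us: "?u \<in> space M" using measurable_space[OF ti ws] .
  have thu: "th ?u = w" by (rule th_thinv[OF b ws])
  have w0: "[0] \<in> words th ell alpha ?u 1"
    using ell1 us unfolding words_def by (auto simp: zero_enat_def[symmetric] enat_0)
  then obtain b0 where "b0 \<in> I w" using bi by blast
  then have Ine: "I w \<noteq> {}" by blast
  let ?f = "\<lambda>b. measure (mu w) (cyl th ell alpha w [b])"
  let ?m = "Min (?f ` I w)"
  have mpos: "0 < ?m" using fI Ine Iw pos by (subst Min_gr_iff) auto
  let ?S = "{measure (mu w) (shiftn 1 ` cyl th ell alpha ?u [b]) | b. [b] \<in> words th ell alpha ?u 1}"
  have "?m \<le> Inf ?S"
  proof (rule cInf_greatest)
    show "?S \<noteq> {}" using w0 by blast
    fix y assume "y \<in> ?S"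
    then obtain c where y: "y = measure (mu w) (shiftn 1 ` cyl th ell alpha ?u [c])" and c: "[c] \<in> words th ell alpha ?u 1"
      by blast
    obtain b where bI: "b \<in> I w" and ab: "alpha ?u c b" using bi c by blast
    have ce: "enat c < ell ?u" using c unfolding words_def by auto
    have img: "shiftn 1 ` cyl th ell alpha ?u [c] = {z \<in> Xfib th ell alpha w. alpha ?u c (z 0)}"
      using shift_cyl_single[where th=th and alpha=alpha and ell=ell and w="?u" and c=c, OF ce] thu by simp
    have "cyl th ell alpha w [b] \<subseteq> {z \<in> Xfib th ell alpha w. alpha ?u c (z 0)}"
      using ab by (auto simp: cyl_def)
    moreover have "{z \<in> Xfib th ell alpha w. alpha ?u c (z 0)} \<in> sets (mu w)"
      unfolding st by (rule alpha_sets)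
    ultimately have "?f b \<le> y" unfolding y img by (rule P.finite_measure_mono)
    moreover have "?m \<le> ?f b" using fI bI by simp
    ultimately show "?m \<le> y" by simp
  qed
  then show ?thesis unfolding Dfun_def using mpos by simp
qed

lemma D_le_Q:
  assumes b: "bij_betw th (space M) (space M)" and th: "th \<in> measurable M M" and ws: "w \<in> space M"
    and n: "1 \<le> n" and v: "v \<in> words th ell alpha w n"
  shows "Dfun M th ell alpha mu ((th ^^ n) w)
     \<le> measure (mu ((th ^^ n) w)) (shiftn 1 ` cyl th ell alpha ((th ^^ (n - 1)) w) [v ! (n - 1)])"
proof -
  have ti: "thinv M th ((th ^^ n) w) = (th ^^ (n - 1)) w"
    using thinv_iter[OF b th ws, of 1 n] n by simp
  have "[v ! (n - 1)] \<in> words th ell alpha ((th ^^ (n - 1)) w) 1"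
    using v n unfolding words_def by auto
  then show ?thesis unfolding Dfun_def ti
    by (intro cInf_lower) (auto intro!: bdd_belowI[where m=0])
qed



theorem mainTheorem11:
  fixes M :: "'w measure" and th :: "'w \<Rightarrow> 'w" and ell :: "'w \<Rightarrow> enat"
    and alpha :: "'w \<Rightarrow> nat \<Rightarrow> nat \<Rightarrow> bool" and phi :: "'w \<Rightarrow> seqn \<Rightarrow> real"
    and PG :: real and kappa :: "'w \<Rightarrow> real" and r :: real
    and a :: nat and xi :: "'w \<Rightarrow> seqn" and Ot :: "'w set"
    and lam :: "'w \<Rightarrow> real" and mu :: "'w \<Rightarrow> seqn measure"
  assumes "prob_space M"
    and "th \<in> measurable M M" and "bij_betw th (space M) (space M)"
    and "thinv M th \<in> measurable M M" and "distr M M th = M" and "ergodic_map M th"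
    and "ell \<in> measurable M (count_space UNIV)" and "\<forall>w \<in> space M. 1 < ell w"
    and "\<forall>i j. {w \<in> space M. alpha w i j} \<in> sets M"
    and "AE w in M. \<forall>i. enat i < ell w \<longrightarrow> (\<exists>j. enat j < ell (th w) \<and> alpha w i j)"
    and "(\<lambda>(w, x). if x \<in> Xfib th ell alpha w then phi w x else 0) \<in> borel_measurable (M \<Otimes>\<^sub>M SeqM)"
    and "topmix M th ell alpha"
    and "H2 M th ell alpha phi" and "S1 M th ell alpha phi" and "S2 M th ell alpha phi"
    and "divergence_type M th ell alpha phi PG a xi Ot"
    and "lambda_limit M th ell alpha phi PG Ot xi lam"
    and "conformal M th ell alpha phi PG lam mu"
    and "H1 M th ell alpha phi kappa r"
  shows
    "(AE w in M. \<forall>n \<ge> 1. \<forall>v \<in> words th ell alpha w n. \<forall>x \<in> cyl th ell alpha w v.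
        measure (mu ((th ^^ n) w)) (shiftn 1 ` cyl th ell alpha ((th ^^ (n - 1)) w) [v ! (n - 1)])
          / Bfun M th kappa r ((th ^^ n) w)
        \<le> Lam th lam w n * measure (mu w) (cyl th ell alpha w v) / exp (phin phi th w n x - real n * PG)
      \<and> Lam th lam w n * measure (mu w) (cyl th ell alpha w v) / exp (phin phi th w n x - real n * PG)
        \<le> Bfun M th kappa r ((th ^^ n) w)
          * measure (mu ((th ^^ n) w)) (shiftn 1 ` cyl th ell alpha ((th ^^ (n - 1)) w) [v ! (n - 1)]))
   \<and> (\<forall>Obi I. big_image M th ell alpha Obi I \<longrightarrow>
        (AE w in M. w \<in> Obi \<longrightarrow> Dfun M th ell alpha mu w > 0)
      \<and> (AE w in M. \<forall>n \<ge> 1. (th ^^ n) w \<in> Obi \<longrightarrow>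
           (\<forall>v \<in> words th ell alpha w n. \<forall>x \<in> cyl th ell alpha w v.
              Dfun M th ell alpha mu ((th ^^ n) w) / Bfun M th kappa r ((th ^^ n) w)
              \<le> Lam th lam w n * measure (mu w) (cyl th ell alpha w v) / exp (phin phi th w n x - real n * PG)
            \<and> Lam th lam w n * measure (mu w) (cyl th ell alpha w v) / exp (phin phi th w n x - real n * PG)
              \<le> Bfun M th kappa r ((th ^^ n) w))))"
proof -
  note pM = assms(1) and thM = assms(2) and bij = assms(3) and tim = assms(4) and dis = assms(5)
    and ell1 = assms(8) and conf = assms(18) and H1a = assms(19)
  interpret MP: prob_space M by (rule pM)
  have hol: "holder M th ell alpha phi 1 kappa r" and intB: "(\<integral>\<^sup>+ w. logB M th kappa r w \<partial>M) < \<infinity>"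
    using H1a unfolding H1_def by auto
  have r0: "0 < r" and kmeas: "kappa \<in> borel_measurable M" and kp: "\<forall>u \<in> space M. 1 \<le> kappa u"
    and Vae: "AE w in M. \<forall>j \<ge> 1. Var th ell alpha phi w j \<le> ereal (kappa w * r ^ j)"
    using hol unfolding holder_def by auto
  obtain s :: "nat \<Rightarrow> real" where "AE w in M. 0 < lam w \<and>
             (\<lambda>k. enn2real (Pser th ell alpha phi Ot xi w (s k))
                  / enn2real (Pser th ell alpha phi Ot xi (th w) (s k))) \<longlonglongrightarrow> lam w"
    using assms(17) unfolding lambda_limit_def by blast
  then have lamae: "AE w in M. 0 < lam w" by (rule AE_mp) auto
  have confae: "AE w in M. prob_space (mu w) \<and> sets (mu w) = sets (restrict_space SeqM (Xfib th ell alpha w))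
        \<and> (\<forall>n. \<forall>v \<in> words th ell alpha w n. measure (mu w) (cyl th ell alpha w v) > 0)
        \<and> (\<forall>c E. [c] \<in> words th ell alpha w 1 \<longrightarrow> E \<in> sets (mu w) \<longrightarrow> E \<subseteq> cyl th ell alpha w [c] \<longrightarrow>
              emeasure (mu (th w)) (shiftn 1 ` E)
                = ennreal (lam w) * (\<integral>\<^sup>+ x \<in> E. ennreal (exp (PG - phi w x)) \<partial>mu w))"
    using conf unfolding conformal_def .
  have logae: "AE w in M. logB M th kappa r w \<noteq> \<infinity>"
    using nn_integral_PInf_AE[OF logB_meas[OF tim kmeas]] intB by simp
  define G where "G w \<longleftrightarrow> prob_space (mu w) \<and> sets (mu w) = sets (restrict_space SeqM (Xfib th ell alpha w))
        \<and> (\<forall>n. \<forall>v \<in> words th ell alpha w n. measure (mu w) (cyl th ell alpha w v) > 0)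
        \<and> (\<forall>c E. [c] \<in> words th ell alpha w 1 \<longrightarrow> E \<in> sets (mu w) \<longrightarrow> E \<subseteq> cyl th ell alpha w [c] \<longrightarrow>
              emeasure (mu (th w)) (shiftn 1 ` E)
                = ennreal (lam w) * (\<integral>\<^sup>+ x \<in> E. ennreal (exp (PG - phi w x)) \<partial>mu w))
        \<and> (\<forall>j \<ge> 1. Var th ell alpha phi w j \<le> ereal (kappa w * r ^ j))
        \<and> 0 < lam w \<and> logB M th kappa r w \<noteq> \<infinity>" for w
  have Gae: "AE w in M. G w"
    using confae Vae lamae logae by eventually_elim (simp add: G_def)
  have allG: "AE w in M. \<forall>k. G ((th ^^ k) w)" by (rule AE_iter[OF thM dis Gae])
  have good: "\<forall>n \<ge> 1. \<forall>v \<in> words th ell alpha w n. \<forall>x \<in> cyl th ell alpha w v.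
        measure (mu ((th ^^ n) w)) (shiftn 1 ` cyl th ell alpha ((th ^^ (n - 1)) w) [v ! (n - 1)])
          / Bfun M th kappa r ((th ^^ n) w)
        \<le> Lam th lam w n * measure (mu w) (cyl th ell alpha w v) / exp (phin phi th w n x - real n * PG)
      \<and> Lam th lam w n * measure (mu w) (cyl th ell alpha w v) / exp (phin phi th w n x - real n * PG)
        \<le> Bfun M th kappa r ((th ^^ n) w)
          * measure (mu ((th ^^ n) w)) (shiftn 1 ` cyl th ell alpha ((th ^^ (n - 1)) w) [v ! (n - 1)])"
    if ws: "w \<in> space M" and g: "\<forall>k. G ((th ^^ k) w)" for w
  proof (intro allI impI ballI)
    fix n v x assume n: "1 \<le> n" and v: "v \<in> words th ell alpha w n" and x: "x \<in> cyl th ell alpha w v"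
    have pr: "\<And>k. prob_space (mu ((th ^^ k) w))" using g unfolding G_def by blast
    have cf: "\<And>k c E. [c] \<in> words th ell alpha ((th ^^ k) w) 1 \<Longrightarrow> E \<in> sets (mu ((th ^^ k) w)) \<Longrightarrow>
         E \<subseteq> cyl th ell alpha ((th ^^ k) w) [c] \<Longrightarrow>
         emeasure (mu (th ((th ^^ k) w))) (shiftn 1 ` E)
           = ennreal (lam ((th ^^ k) w)) * (\<integral>\<^sup>+ x \<in> E. ennreal (exp (PG - phi ((th ^^ k) w) x)) \<partial>mu ((th ^^ k) w))"
      using g unfolding G_def by blast
    have stt: "\<And>k. sets (mu ((th ^^ k) w)) = sets (restrict_space SeqM (Xfib th ell alpha ((th ^^ k) w)))"
      using g unfolding G_def by blast
    have var: "\<And>k j. 1 \<le> j \<Longrightarrow> Var th ell alpha phi ((th ^^ k) w) j \<le> ereal (kappa ((th ^^ k) w) * r ^ j)"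
      using g unfolding G_def by blast
    have lm: "\<And>k. 0 < lam ((th ^^ k) w)" using g unfolding G_def by blast
    have fin: "\<And>k. logB M th kappa r ((th ^^ k) w) \<noteq> \<infinity>" using g unfolding G_def by blast
    note bb = bound1[OF bij thM ws kp r0 pr cf stt var lm fin n v x]
    show "measure (mu ((th ^^ n) w)) (shiftn 1 ` cyl th ell alpha ((th ^^ (n - 1)) w) [v ! (n - 1)])
          / Bfun M th kappa r ((th ^^ n) w)
        \<le> Lam th lam w n * measure (mu w) (cyl th ell alpha w v) / exp (phin phi th w n x - real n * PG)
      \<and> Lam th lam w n * measure (mu w) (cyl th ell alpha w v) / exp (phin phi th w n x - real n * PG)
        \<le> Bfun M th kappa r ((th ^^ n) w)
          * measure (mu ((th ^^ n) w)) (shiftn 1 ` cyl th ell alpha ((th ^^ (n - 1)) w) [v ! (n - 1)])"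
      using bb by (rule conjI)
  qed
  have part1: "AE w in M. \<forall>n \<ge> 1. \<forall>v \<in> words th ell alpha w n. \<forall>x \<in> cyl th ell alpha w v.
        measure (mu ((th ^^ n) w)) (shiftn 1 ` cyl th ell alpha ((th ^^ (n - 1)) w) [v ! (n - 1)])
          / Bfun M th kappa r ((th ^^ n) w)
        \<le> Lam th lam w n * measure (mu w) (cyl th ell alpha w v) / exp (phin phi th w n x - real n * PG)
      \<and> Lam th lam w n * measure (mu w) (cyl th ell alpha w v) / exp (phin phi th w n x - real n * PG)
        \<le> Bfun M th kappa r ((th ^^ n) w)
          * measure (mu ((th ^^ n) w)) (shiftn 1 ` cyl th ell alpha ((th ^^ (n - 1)) w) [v ! (n - 1)])"
    using allG AE_space by eventually_elim (rule good)
  have part2: "(AE w in M. w \<in> Obi \<longrightarrow> Dfun M th ell alpha mu w > 0)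
      \<and> (AE w in M. \<forall>n \<ge> 1. (th ^^ n) w \<in> Obi \<longrightarrow>
           (\<forall>v \<in> words th ell alpha w n. \<forall>x \<in> cyl th ell alpha w v.
              Dfun M th ell alpha mu ((th ^^ n) w) / Bfun M th kappa r ((th ^^ n) w)
              \<le> Lam th lam w n * measure (mu w) (cyl th ell alpha w v) / exp (phin phi th w n x - real n * PG)
            \<and> Lam th lam w n * measure (mu w) (cyl th ell alpha w v) / exp (phin phi th w n x - real n * PG)
              \<le> Bfun M th kappa r ((th ^^ n) w)))"
    if bi: "big_image M th ell alpha Obi I" for Obi I
  proof
    have biw: "\<forall>w \<in> Obi. finite (I w) \<and> (\<forall>b \<in> I w. [b] \<in> words th ell alpha w 1)
        \<and> (\<forall>c. [c] \<in> words th ell alpha (thinv M th w) 1 \<longrightarrow> (\<exists>b \<in> I w. alpha (thinv M th w) c b))"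
      using bi unfolding big_image_def by blast
    show "AE w in M. w \<in> Obi \<longrightarrow> Dfun M th ell alpha mu w > 0"
      using Gae AE_space
    proof eventually_elim
      case (elim w)
      show ?case
      proof
        assume wO: "w \<in> Obi"
        show "Dfun M th ell alpha mu w > 0"
          using elim biw wO unfolding G_def
          by (intro D_pos[OF bij tim elim(2) ell1, where I=I]) auto
      qed
    qed
    show "AE w in M. \<forall>n \<ge> 1. (th ^^ n) w \<in> Obi \<longrightarrow>
           (\<forall>v \<in> words th ell alpha w n. \<forall>x \<in> cyl th ell alpha w v.
              Dfun M th ell alpha mu ((th ^^ n) w) / Bfun M th kappa r ((th ^^ n) w)
              \<le> Lam th lam w n * measure (mu w) (cyl th ell alpha w v) / exp (phin phi th w n x - real n * PG)
            \<and> Lam th lam w n * measure (mu w) (cyl th ell alpha w v) / exp (phin phi th w n x - real n * PG)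
              \<le> Bfun M th kappa r ((th ^^ n) w))"
      using allG AE_space
    proof eventually_elim
      case (elim w)
      show ?case
      proof (intro allI impI ballI)
        fix n v x assume n: "1 \<le> n" and O: "(th ^^ n) w \<in> Obi" and v: "v \<in> words th ell alpha w n"
          and x: "x \<in> cyl th ell alpha w v"
        let ?Q = "measure (mu ((th ^^ n) w)) (shiftn 1 ` cyl th ell alpha ((th ^^ (n - 1)) w) [v ! (n - 1)])"
        let ?B = "Bfun M th kappa r ((th ^^ n) w)"
        let ?Mid = "Lam th lam w n * measure (mu w) (cyl th ell alpha w v) / exp (phin phi th w n x - real n * PG)"
        have gg: "?Q / ?B \<le> ?Mid \<and> ?Mid \<le> ?B * ?Q" using good[OF elim(2) elim(1)] n v x by blast
        have DQ: "Dfun M th ell alpha mu ((th ^^ n) w) \<le> ?Q" by (rule D_le_Q[OF bij thM elim(2) n v])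
        have Bpos: "0 < ?B" unfolding Bfun_def by simp
        have pQ: "prob_space (mu ((th ^^ n) w))" using elim(1) unfolding G_def by blast
        have Q1: "?Q \<le> 1" using prob_space.prob_le_1[OF pQ] .
        have "Dfun M th ell alpha mu ((th ^^ n) w) / ?B \<le> ?Q / ?B"
          using DQ Bpos by (simp add: divide_right_mono)
        then have a1: "Dfun M th ell alpha mu ((th ^^ n) w) / ?B \<le> ?Mid" using gg by linarith
        have "?B * ?Q \<le> ?B" using Q1 Bpos by (simp add: mult_left_le)
        then have a2: "?Mid \<le> ?B" using gg by linarith
        show "Dfun M th ell alpha mu ((th ^^ n) w) / ?B \<le> ?Mid \<and> ?Mid \<le> ?B" using a1 a2 by (rule conjI)
      qed
    qed
  qed
  show ?thesis using part1 part2 by blast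
qed


end
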